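(* Let $\Bbbk$ be a field of characteristic zero and $n \ge 1$. Let $\mathrm{Se}_n$ be the Sergeev algebra and $e_{(n)}, e_{(1^n)} \in \mathrm{Se}_n$ as in the context. Then there is an isomorphism of $\mathbb{Z}/2\mathbb{Z}$-graded left $\mathrm{Se}_n$-modules $\mathrm{Se}_n e_{(n)} \cong \mathrm{Se}_n e_{(1^n)}\{n\}$.
   Context: $\mathrm{Cliff}_n$ is the $\Bbbk$-algebra with generators $c_1,\dots,c_n$ and relations $c_i^2=-1$ and $c_ic_j=-c_jc_i$ for $i\neq j$. The Sergeev algebra is $\mathrm{Se}_n = \mathrm{Cliff}_n \rtimes \Bbbk[S_n]$, where $S_n$ acts on $\mathrm{Cliff}_n$ by permuting the generators ($w c_i w^{-1} = c_{w(i)}$). It is $\mathbb{Z}/2\mathbb{Z}$-graded with $c_i$ odd and the simple transpositions $s_1,\dots,s_{n-1}$ even. $e_{(n)} = \frac{1}{n!}\sum_{w \in S_n} w$ and $e_{(1^n)} = \frac{1}{n!}\sum_{w\in S_n} (-1)^{\ell(w)} w$, where $\ell$ is the length function. For a graded module $M$, $M\{k\}$ denotes $M$ with its $\mathbb{Z}/2\mathbb{Z}$-grading shifted by $k \bmod 2$. *)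

theory Defs
  imports "HOL-Combinatorics.Permutations"
begin

text \<open>Concrete model of the Sergeev algebra Se_n = Cliff_n \<rtimes> k[S_n].
  The generators are indexed by 0,...,n-1.  An element of Se_n is a coefficient
  function on the standard basis c_A w, where A is a subset of {0..<n}
  (c_A = c_{a_1} ... c_{a_k} with a_1 < ... < a_k) and w is a permutation of {0..<n}.\<close>

definition se_basis :: "nat \<Rightarrow> (nat set \<times> (nat \<Rightarrow> nat)) set" where
  "se_basis n = {(A, w). A \<subseteq> {..<n} \<and> w permutes {..<n}}"

type_synonym 'k se = "nat set \<times> (nat \<Rightarrow> nat) \<Rightarrow> 'k"

definition se_carrier :: "nat \<Rightarrow> ('k::field) se set" where
  "se_carrier n = {x. \<forall>b. b \<notin> se_basis n \<longrightarrow> x b = 0}"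

text \<open>c_A c_B = (-1)^(#{(a,b) in A x B. b < a} + |A \<inter> B|) c_{A \<triangle> B}
  (from c_i^2 = -1 and c_i c_j = - c_j c_i).\<close>
definition clif_sign :: "nat set \<Rightarrow> nat set \<Rightarrow> 'k::field" where
  "clif_sign A B = (-1) ^ (card {(a, b). a \<in> A \<and> b \<in> B \<and> b < a} + card (A \<inter> B))"

text \<open>w c_B w^{-1} = c_{w b_1} ... c_{w b_k} = (-1)^(inversions of w on B) c_{w(B)}.\<close>
definition conj_sign :: "(nat \<Rightarrow> nat) \<Rightarrow> nat set \<Rightarrow> 'k::field" where
  "conj_sign w B = (-1) ^ card {(b, b'). b \<in> B \<and> b' \<in> B \<and> b < b' \<and> w b' < w b}"

text \<open>(c_A w)(c_B v) = c_A (w c_B w^{-1}) w v.\<close>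
definition se_bmul :: "nat set \<times> (nat \<Rightarrow> nat) \<Rightarrow> nat set \<times> (nat \<Rightarrow> nat)
    \<Rightarrow> 'k::field \<times> (nat set \<times> (nat \<Rightarrow> nat))" where
  "se_bmul p q = (case p of (A, w) \<Rightarrow> case q of (B, v) \<Rightarrow>
     (conj_sign w B * clif_sign A (w ` B), ((A - w ` B) \<union> (w ` B - A), w \<circ> v)))"

definition se_mult :: "nat \<Rightarrow> ('k::field) se \<Rightarrow> 'k se \<Rightarrow> 'k se" where
  "se_mult n x y = (\<lambda>c. \<Sum>(p, q) \<in> se_basis n \<times> se_basis n.
      (case se_bmul p q of (s, r) \<Rightarrow> if r = c then s * x p * y q else 0))"

definition se_add :: "('k::field) se \<Rightarrow> 'k se \<Rightarrow> 'k se" where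
  "se_add x y = (\<lambda>c. x c + y c)"

definition se_smult :: "'k::field \<Rightarrow> 'k se \<Rightarrow> 'k se" where
  "se_smult a x = (\<lambda>c. a * x c)"

text \<open>Z/2-grading: c_i odd, permutations even; x is homogeneous of degree d (mod 2).\<close>
definition se_homog :: "nat \<Rightarrow> nat \<Rightarrow> ('k::field) se \<Rightarrow> bool" where
  "se_homog n d x \<longleftrightarrow> x \<in> se_carrier n \<and> (\<forall>A w. x (A, w) \<noteq> 0 \<longrightarrow> even (card A + d))"

text \<open>Length of w in S_n (Coxeter length w.r.t. simple transpositions) = number of inversions.\<close>
definition perm_length :: "nat \<Rightarrow> (nat \<Rightarrow> nat) \<Rightarrow> nat" where
  "perm_length n w = card {(i, j). i < j \<and> j < n \<and> w j < w i}"

definition e_triv :: "nat \<Rightarrow> ('k::field) se" where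
  "e_triv n = (\<lambda>(A, w). if A = {} \<and> w permutes {..<n} then 1 / of_nat (fact n) else 0)"

definition e_sgn :: "nat \<Rightarrow> ('k::field) se" where
  "e_sgn n = (\<lambda>(A, w). if A = {} \<and> w permutes {..<n}
      then (-1) ^ perm_length n w / of_nat (fact n) else 0)"

definition se_left_ideal :: "nat \<Rightarrow> ('k::field) se \<Rightarrow> 'k se set" where
  "se_left_ideal n e = {se_mult n x e | x. x \<in> se_carrier n}"

end

theory Submission
  imports Defs
begin

definition cnt :: "nat \<Rightarrow> (nat \<Rightarrow> nat \<Rightarrow> bool) \<Rightarrow> nat" where
  "cnt n P = card {(x,y). x<n \<and> y<n \<and> P x y}"

lemma cnt_fin: "finite {(x,y). x<(n::nat) \<and> y<n \<and> P x y}"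
  by (rule finite_subset[of _ "{..<n} \<times> {..<n}"]) (auto simp: finite_cartesian_product)

lemma cnt_split: "cnt n P = cnt n (\<lambda>x y. P x y \<and> Q x y) + cnt n (\<lambda>x y. P x y \<and> \<not> Q x y)"
proof -
  have "{(x,y). x<n \<and> y<n \<and> P x y} = {(x,y). x<n \<and> y<n \<and> P x y \<and> Q x y} \<union> {(x,y). x<n \<and> y<n \<and> P x y \<and> \<not> Q x y}"
    by auto
  then show ?thesis unfolding cnt_def
    by (simp add: card_Un_disjoint[OF cnt_fin cnt_fin] disjoint_iff)
qed

lemma cnt_cong: "(\<And>x y. x<n \<Longrightarrow> y<n \<Longrightarrow> P x y = Q x y) \<Longrightarrow> cnt n P = cnt n Q"
  unfolding cnt_def by (rule arg_cong[where f=card]) auto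

lemma cnt_swap: "cnt n P = cnt n (\<lambda>x y. P y x)"
proof -
  have "{(x,y). x<n \<and> y<n \<and> P x y} = (\<lambda>(x,y). (y,x)) ` {(x,y). x<n \<and> y<n \<and> P y x}"
    by (auto simp: image_def)
  moreover have "inj_on (\<lambda>(x,y). (y,x)) X" for X :: "(nat\<times>nat) set"
    by (auto simp: inj_on_def)
  ultimately show ?thesis unfolding cnt_def by (simp add: card_image)
qed

lemma cnt_perm:
  assumes w: "w permutes {..<n}"
  shows "cnt n P = cnt n (\<lambda>x y. P (w x) (w y))"
proof -
  have lt: "w x < n \<longleftrightarrow> x < n" for x using permutes_in_image[OF w, of x] by simp
  have "{(x,y). x<n \<and> y<n \<and> P x y} = (\<lambda>(x,y). (w x, w y)) ` {(x,y). x<n \<and> y<n \<and> P (w x) (w y)}"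
  proof (rule set_eqI, rule iffI)
    fix z assume "z \<in> {(x,y). x<n \<and> y<n \<and> P x y}"
    then obtain a b where z: "z = (a,b)" "a<n" "b<n" "P a b" by auto
    have e: "w (inv w a) = a" "w (inv w b) = b"
      using permutes_inv_o(1)[OF w] by (metis comp_apply id_apply)+
    have "inv w a < n" "inv w b < n" using lt e z by metis+
    then show "z \<in> (\<lambda>(x,y). (w x, w y)) ` {(x,y). x<n \<and> y<n \<and> P (w x) (w y)}"
      using z e unfolding image_def by (intro CollectI bexI[of _ "(inv w a, inv w b)"]) auto
  qed (auto simp: lt)
  moreover have "inj_on (\<lambda>(x,y). (w x, w y)) X" for X
    using permutes_inj[OF w] by (auto simp: inj_on_def inj_def)
  ultimately show ?thesis unfolding cnt_def by (simp add: card_image)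
qed

lemma m1_eq: "even (a + b) \<Longrightarrow> (-1::'k::field_char_0)^a = (-1)^b"
  by (cases "even a") (auto simp: minus_one_power_iff)

lemma perm_length_cnt: "perm_length n w = cnt n (\<lambda>x y. x<y \<and> w y < w x)"
  unfolding perm_length_def cnt_def by (rule arg_cong[where f=card]) auto

lemma inv_mult:
  assumes w: "w permutes {..<n}" and v: "v permutes {..<n}"
  shows "even (cnt n (\<lambda>x y. x<y \<and> w (v y) < w (v x)) + cnt n (\<lambda>x y. x<y \<and> v y < v x)
     + cnt n (\<lambda>x y. x<y \<and> w y < w x))"
proof -
  have iw: "w a = w b \<longleftrightarrow> a = b" for a b using permutes_inj[OF w] by (auto simp: inj_def)
  have iv: "v a = v b \<longleftrightarrow> a = b" for a b using permutes_inj[OF v] by (auto simp: inj_def)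
  define a where "a = cnt n (\<lambda>x y. (x<y \<and> w (v y) < w (v x)) \<and> v x < v y)"
  define b where "b = cnt n (\<lambda>x y. (x<y \<and> w (v y) < w (v x)) \<and> \<not> v x < v y)"
  define c where "c = cnt n (\<lambda>x y. (x<y \<and> v y < v x) \<and> \<not> w (v y) < w (v x))"
  have 1: "cnt n (\<lambda>x y. x<y \<and> w (v y) < w (v x)) = a + b"
    unfolding a_def b_def by (rule cnt_split)
  have "cnt n (\<lambda>x y. x<y \<and> v y < v x) = cnt n (\<lambda>x y. (x<y \<and> v y < v x) \<and> w (v y) < w (v x)) + c"
    unfolding c_def by (rule cnt_split)
  moreover have "cnt n (\<lambda>x y. (x<y \<and> v y < v x) \<and> w (v y) < w (v x)) = b"
    unfolding b_def by (rule cnt_cong) (metis iv linorder_neqE_nat not_less_iff_gr_or_eq)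
  ultimately have 2: "cnt n (\<lambda>x y. x<y \<and> v y < v x) = b + c" by simp
  have "cnt n (\<lambda>x y. x<y \<and> w y < w x) = cnt n (\<lambda>x y. v x < v y \<and> w (v y) < w (v x))"
    by (rule cnt_perm[OF v])
  also have "\<dots> = cnt n (\<lambda>x y. (v x < v y \<and> w (v y) < w (v x)) \<and> x < y)
      + cnt n (\<lambda>x y. (v x < v y \<and> w (v y) < w (v x)) \<and> \<not> x < y)"
    by (rule cnt_split)
  also have "cnt n (\<lambda>x y. (v x < v y \<and> w (v y) < w (v x)) \<and> x < y) = a"
    unfolding a_def by (rule cnt_cong) auto
  also have "cnt n (\<lambda>x y. (v x < v y \<and> w (v y) < w (v x)) \<and> \<not> x < y)
      = cnt n (\<lambda>x y. (v y < v x \<and> w (v x) < w (v y)) \<and> \<not> y < x)"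
    by (rule cnt_swap)
  also have "\<dots> = c"
    unfolding c_def by (rule cnt_cong) (metis iv iw linorder_neqE_nat not_less_iff_gr_or_eq)
  finally have 3: "cnt n (\<lambda>x y. x<y \<and> w y < w x) = a + c" .
  show ?thesis unfolding 1 2 3 by presburger
qed

definition sg :: "nat \<Rightarrow> (nat \<Rightarrow> nat) \<Rightarrow> 'k::field_char_0" where
  "sg n w = (-1) ^ perm_length n w"

lemma sg_mult:
  assumes w: "w permutes {..<n}" and v: "v permutes {..<n}"
  shows "(sg n (w \<circ> v) :: 'k::field_char_0) = sg n w * sg n v"
  unfolding sg_def power_add[symmetric] perm_length_cnt
  by (rule m1_eq) (use inv_mult[OF w v] in \<open>simp add: o_def add.commute add.left_commute\<close>)

lemma sg_id: "sg n id = 1"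
proof -
  have e: "{(i, j). i < j \<and> j < n \<and> j < (i::nat)} = {}" by auto
  show ?thesis unfolding sg_def perm_length_def by (simp add: e)
qed

lemma sg_sq: "(sg n w :: 'k::field_char_0) * sg n w = 1"
  unfolding sg_def power_add[symmetric] by simp

lemma sg_inv:
  assumes w: "w permutes {..<n}"
  shows "(sg n (inv w) :: 'k::field_char_0) = sg n w"
proof -
  have "(sg n w :: 'k) * sg n (inv w) = sg n (w \<circ> inv w)"
    by (rule sg_mult[OF w permutes_inv[OF w], symmetric])
  also have "\<dots> = 1" using permutes_inv_o(1)[OF w] sg_id by simp
  finally have "(sg n w :: 'k) * sg n (inv w) = 1" .
  then show ?thesis using sg_sq[of n w] by (metis mult.left_neutral mult.assoc)
qed

lemma F4:
  assumes w: "w permutes {..<n}" and B: "B \<subseteq> {..<n}"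
  shows "even (cnt n (\<lambda>x y. x<y \<and> w y < w x) + cnt n (\<lambda>x y. x\<in>B \<and> y\<in>B \<and> x<y \<and> w y < w x)
     + cnt n (\<lambda>x y. x\<notin>B \<and> y\<notin>B \<and> x<y \<and> w y < w x) + cnt n (\<lambda>x y. x\<in>B \<and> y<x)
     + cnt n (\<lambda>x y. x\<in>w`B \<and> y<x))"
proof -
  have iw: "w a = w b \<longleftrightarrow> a = b" for a b using permutes_inj[OF w] by (auto simp: inj_def)
  have iwB: "w a \<in> w`B \<longleftrightarrow> a \<in> B" for a using permutes_inj[OF w] by (auto simp: inj_def)
  define iB where "iB = cnt n (\<lambda>x y. x\<in>B \<and> y\<in>B \<and> x<y \<and> w y < w x)"
  define iC where "iC = cnt n (\<lambda>x y. x\<notin>B \<and> y\<notin>B \<and> x<y \<and> w y < w x)"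
  define a1 where "a1 = cnt n (\<lambda>x y. ((x\<in>B \<and> y<x) \<and> y\<in>B) \<and> w y < w x)"
  define a2 where "a2 = cnt n (\<lambda>x y. ((x\<in>B \<and> y<x) \<and> y\<in>B) \<and> \<not> w y < w x)"
  define b1 where "b1 = cnt n (\<lambda>x y. ((x\<in>B \<and> y<x) \<and> y\<notin>B) \<and> w y < w x)"
  define b2 where "b2 = cnt n (\<lambda>x y. ((x\<in>B \<and> y<x) \<and> y\<notin>B) \<and> \<not> w y < w x)"
  define a3 where "a3 = cnt n (\<lambda>x y. ((x\<in>B \<and> w y < w x) \<and> y\<in>B) \<and> \<not> y < x)"
  define b3 where "b3 = cnt n (\<lambda>x y. ((x\<in>B \<and> w y < w x) \<and> y\<notin>B) \<and> \<not> y < x)"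
  have crB: "cnt n (\<lambda>x y. x\<in>B \<and> y<x) = a1 + a2 + b1 + b2"
    unfolding a1_def a2_def b1_def b2_def
    using cnt_split[of n "\<lambda>x y. x\<in>B \<and> y<x" "\<lambda>x y. y\<in>B"]
      cnt_split[of n "\<lambda>x y. (x\<in>B \<and> y<x) \<and> y\<in>B" "\<lambda>x y. w y < w x"]
      cnt_split[of n "\<lambda>x y. (x\<in>B \<and> y<x) \<and> y\<notin>B" "\<lambda>x y. w y < w x"] by simp
  have "cnt n (\<lambda>x y. x\<in>w`B \<and> y<x) = cnt n (\<lambda>x y. w x\<in>w`B \<and> w y< w x)"
    by (rule cnt_perm[OF w])
  also have "\<dots> = cnt n (\<lambda>x y. x\<in>B \<and> w y< w x)" by (simp add: iwB)
  also have "\<dots> = cnt n (\<lambda>x y. ((x\<in>B \<and> w y < w x) \<and> y\<in>B) \<and> y < x) + a3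
       + cnt n (\<lambda>x y. ((x\<in>B \<and> w y < w x) \<and> y\<notin>B) \<and> y < x) + b3"
    unfolding a3_def b3_def
    using cnt_split[of n "\<lambda>x y. x\<in>B \<and> w y < w x" "\<lambda>x y. y\<in>B"]
      cnt_split[of n "\<lambda>x y. (x\<in>B \<and> w y < w x) \<and> y\<in>B" "\<lambda>x y. y < x"]
      cnt_split[of n "\<lambda>x y. (x\<in>B \<and> w y < w x) \<and> y\<notin>B" "\<lambda>x y. y < x"] by simp
  also have "cnt n (\<lambda>x y. ((x\<in>B \<and> w y < w x) \<and> y\<in>B) \<and> y < x) = a1"
    unfolding a1_def by (rule cnt_cong) auto
  also have "cnt n (\<lambda>x y. ((x\<in>B \<and> w y < w x) \<and> y\<notin>B) \<and> y < x) = b1"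
    unfolding b1_def by (rule cnt_cong) auto
  finally have crD: "cnt n (\<lambda>x y. x\<in>w`B \<and> y<x) = a1 + a3 + b1 + b3" by simp
  have a3: "a3 = iB" unfolding a3_def iB_def
    by (rule cnt_cong) (metis iw linorder_neqE_nat not_less_iff_gr_or_eq)
  have "a2 = cnt n (\<lambda>x y. ((y\<in>B \<and> x<y) \<and> x\<in>B) \<and> \<not> w x < w y)"
    unfolding a2_def by (rule cnt_swap)
  also have "\<dots> = iB" unfolding iB_def
    by (rule cnt_cong) (metis iw linorder_neqE_nat not_less_iff_gr_or_eq)
  finally have a2: "a2 = iB" .
  have "cnt n (\<lambda>x y. x<y \<and> w y < w x) = cnt n (\<lambda>x y. (x<y \<and> w y < w x) \<and> x \<in> B)
     + cnt n (\<lambda>x y. (x<y \<and> w y < w x) \<and> x \<notin> B)" by (rule cnt_split)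
  also have "cnt n (\<lambda>x y. (x<y \<and> w y < w x) \<and> x \<in> B) =
     cnt n (\<lambda>x y. ((x<y \<and> w y < w x) \<and> x \<in> B) \<and> y \<in> B) + cnt n (\<lambda>x y. ((x<y \<and> w y < w x) \<and> x \<in> B) \<and> y \<notin> B)"
    by (rule cnt_split)
  also have "cnt n (\<lambda>x y. (x<y \<and> w y < w x) \<and> x \<notin> B) =
     cnt n (\<lambda>x y. ((x<y \<and> w y < w x) \<and> x \<notin> B) \<and> y \<in> B) + cnt n (\<lambda>x y. ((x<y \<and> w y < w x) \<and> x \<notin> B) \<and> y \<notin> B)"
    by (rule cnt_split)
  also have "cnt n (\<lambda>x y. ((x<y \<and> w y < w x) \<and> x \<in> B) \<and> y \<in> B) = iB"
    unfolding iB_def by (rule cnt_cong) auto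
  also have "cnt n (\<lambda>x y. ((x<y \<and> w y < w x) \<and> x \<notin> B) \<and> y \<notin> B) = iC"
    unfolding iC_def by (rule cnt_cong) auto
  also have "cnt n (\<lambda>x y. ((x<y \<and> w y < w x) \<and> x \<in> B) \<and> y \<notin> B) = b3"
    unfolding b3_def by (rule cnt_cong) (metis iw linorder_neqE_nat not_less_iff_gr_or_eq)
  also have "cnt n (\<lambda>x y. ((x<y \<and> w y < w x) \<and> x \<notin> B) \<and> y \<in> B)
     = cnt n (\<lambda>x y. ((y<x \<and> w x < w y) \<and> y \<notin> B) \<and> x \<in> B)" by (rule cnt_swap)
  also have "\<dots> = b2"
    unfolding b2_def by (rule cnt_cong) (metis iw linorder_neqE_nat not_less_iff_gr_or_eq)
  finally have iN: "cnt n (\<lambda>x y. x<y \<and> w y < w x) = iB + b3 + (b2 + iC)" .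
  show ?thesis unfolding iN crB crD a2 a3 iB_def[symmetric] iC_def[symmetric] by presburger
qed

lemma crS_cnt: "X \<subseteq> {..<n} \<Longrightarrow> Y \<subseteq> {..<n} \<Longrightarrow>
   card {(a,b). a\<in>X \<and> b\<in>Y \<and> b<a} = cnt n (\<lambda>x y. x\<in>X \<and> y\<in>Y \<and> y<x)"
  unfolding cnt_def by (rule arg_cong[where f=card]) auto

lemma conj_cnt: "B \<subseteq> {..<n} \<Longrightarrow>
   card {(b,b'). b\<in>B \<and> b'\<in>B \<and> b<b' \<and> w b' < w b} = cnt n (\<lambda>x y. x\<in>B \<and> y\<in>B \<and> x<y \<and> w y < w x)"
  unfolding cnt_def by (rule arg_cong[where f=card]) auto

lemma par_arith: "e4+e6 = cA \<Longrightarrow> k4+k6 = cardA \<Longrightarrow> e2 + 2*m = cA + cD \<Longrightarrow> k2 + 2*m' = cardA + cardD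
  \<Longrightarrow> cardD = cardB \<Longrightarrow> even(e1+e3+e5+cB+cD)
  \<Longrightarrow> even(e1 + (e2+k2) + e3 + (e4+k4) + (e5 + (e6+k6) + (cB + cardB)))" for e1::nat
  by presburger

lemma key0:
  assumes A: "A \<subseteq> {..<n}" and B: "B \<subseteq> {..<n}" and w: "w permutes {..<n}"
  shows "(sg n w :: 'k::field_char_0) * clif_sign (A - w`B \<union> (w`B - A)) {..<n} * conj_sign w B * clif_sign A (w`B)
     = conj_sign w ({..<n} - B) * clif_sign A ({..<n} - w`B) * clif_sign B {..<n}"
proof -
  define D where "D = w`B"
  have D: "D \<subseteq> {..<n}" unfolding D_def using B permutes_in_image[OF w] by auto
  have A': "A \<subseteq> {..<n}" and B': "B \<subseteq> {..<n}" using A B by auto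
  have AD: "A - D \<union> (D - A) \<subseteq> {..<n}" using A' D by auto
  have NB: "{..<n} - B \<subseteq> {..<n}" "{..<n} - D \<subseteq> {..<n}" by auto
  have fA: "finite A" "finite D" "finite B" using A' D B' finite_subset  by blast+
  have e1: "perm_length n w = cnt n (\<lambda>x y. x<y \<and> w y < w x)" by (rule perm_length_cnt)
  have e2: "card {(a,b). a\<in>A - D \<union> (D - A) \<and> b\<in>{..<n} \<and> b<a} = cnt n (\<lambda>x y. x\<in>A - D \<union> (D - A) \<and> y<x)"
  proof -
    have "card {(a,b). a\<in>A - D \<union> (D - A) \<and> b\<in>{..<n} \<and> b<a} = cnt n (\<lambda>x y. x\<in>A - D \<union> (D - A) \<and> y\<in>{..<n} \<and> y<x)" by (rule crS_cnt) (use A B D in auto)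
    also have "\<dots> = cnt n (\<lambda>x y. x\<in>A - D \<union> (D - A) \<and> y<x)" by (rule cnt_cong) auto
    finally show ?thesis .
  qed
  have e3: "card {(b,b'). b\<in>B \<and> b'\<in>B \<and> b<b' \<and> w b' < w b} = cnt n (\<lambda>x y. x\<in>B \<and> y\<in>B \<and> x<y \<and> w y < w x)"
    by (rule conj_cnt[OF B])
  have e4: "card {(a,b). a\<in>A \<and> b\<in>D \<and> b<a} = cnt n (\<lambda>x y. x\<in>A \<and> y\<in>D \<and> y<x)"
    using crS_cnt[OF A D] .
  have e5: "card {(b,b'). b\<in>{..<n}-B \<and> b'\<in>{..<n}-B \<and> b<b' \<and> w b' < w b} = cnt n (\<lambda>x y. x\<notin>B \<and> y\<notin>B \<and> x<y \<and> w y < w x)"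
  proof -
    have "card {(b,b'). b\<in>{..<n}-B \<and> b'\<in>{..<n}-B \<and> b<b' \<and> w b' < w b} = cnt n (\<lambda>x y. x\<in>{..<n}-B \<and> y\<in>{..<n}-B \<and> x<y \<and> w y < w x)" by (rule conj_cnt) (use A B D in auto)
    also have "\<dots> = cnt n (\<lambda>x y. x\<notin>B \<and> y\<notin>B \<and> x<y \<and> w y < w x)" by (rule cnt_cong) auto
    finally show ?thesis .
  qed
  have e6: "card {(a,b). a\<in>A \<and> b\<in>{..<n}-D \<and> b<a} = cnt n (\<lambda>x y. x\<in>A \<and> y\<notin>D \<and> y<x)"
  proof -
    have "card {(a,b). a\<in>A \<and> b\<in>{..<n}-D \<and> b<a} = cnt n (\<lambda>x y. x\<in>A \<and> y\<in>{..<n}-D \<and> y<x)" by (rule crS_cnt) (use A B D in auto)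
    also have "\<dots> = cnt n (\<lambda>x y. x\<in>A \<and> y\<notin>D \<and> y<x)" by (rule cnt_cong) auto
    finally show ?thesis .
  qed
  have e7: "card {(a,b). a\<in>B \<and> b\<in>{..<n} \<and> b<a} = cnt n (\<lambda>x y. x\<in>B \<and> y<x)"
  proof -
    have "card {(a,b). a\<in>B \<and> b\<in>{..<n} \<and> b<a} = cnt n (\<lambda>x y. x\<in>B \<and> y\<in>{..<n} \<and> y<x)" by (rule crS_cnt) (use A B D in auto)
    also have "\<dots> = cnt n (\<lambda>x y. x\<in>B \<and> y<x)" by (rule cnt_cong) auto
    finally show ?thesis .
  qed
  have F1: "cnt n (\<lambda>x y. x\<in>A \<and> y\<in>D \<and> y<x) + cnt n (\<lambda>x y. x\<in>A \<and> y\<notin>D \<and> y<x) = cnt n (\<lambda>x y. x\<in>A \<and> y<x)"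
    using cnt_split[of n "\<lambda>x y. x\<in>A \<and> y<x" "\<lambda>x y. y\<in>D"] by (simp add: conj_ac)
  have cAD: "card A = card (A \<inter> D) + card (A - D)"
    if "finite A" for A D :: "nat set" using that by (metis Diff_Diff_Int Diff_disjoint card_Diff_subset_Int card_Int_Diff Int_commute)
  have F1': "card (A \<inter> D) + card (A \<inter> ({..<n} - D)) = card A"
  proof -
    have "A \<inter> ({..<n} - D) = A - D" using A' by auto
    then show ?thesis using cAD[OF fA(1), of D] by simp
  qed
  have F2: "cnt n (\<lambda>x y. x\<in>A - D \<union> (D - A) \<and> y<x) + 2 * cnt n (\<lambda>x y. (x\<in>A \<and> y<x) \<and> x \<in> D)
      = cnt n (\<lambda>x y. x\<in>A \<and> y<x) + cnt n (\<lambda>x y. x\<in>D \<and> y<x)"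
  proof -
    have s1: "cnt n (\<lambda>x y. x\<in>A \<and> y<x) = cnt n (\<lambda>x y. (x\<in>A \<and> y<x) \<and> x \<in> D) + cnt n (\<lambda>x y. (x\<in>A \<and> y<x) \<and> x \<notin> D)"
      by (rule cnt_split)
    have s2: "cnt n (\<lambda>x y. x\<in>D \<and> y<x) = cnt n (\<lambda>x y. (x\<in>D \<and> y<x) \<and> x \<in> A) + cnt n (\<lambda>x y. (x\<in>D \<and> y<x) \<and> x \<notin> A)"
      by (rule cnt_split)
    have s3: "cnt n (\<lambda>x y. x\<in>A - D \<union> (D - A) \<and> y<x) = cnt n (\<lambda>x y. (x\<in>A - D \<union> (D - A) \<and> y<x) \<and> x \<in> A) + cnt n (\<lambda>x y. (x\<in>A - D \<union> (D - A) \<and> y<x) \<and> x \<notin> A)"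
      by (rule cnt_split)
    have s4: "cnt n (\<lambda>x y. (x\<in>A - D \<union> (D - A) \<and> y<x) \<and> x \<in> A) = cnt n (\<lambda>x y. (x\<in>A \<and> y<x) \<and> x \<notin> D)"
      by (rule cnt_cong) auto
    have s5: "cnt n (\<lambda>x y. (x\<in>A - D \<union> (D - A) \<and> y<x) \<and> x \<notin> A) = cnt n (\<lambda>x y. (x\<in>D \<and> y<x) \<and> x \<notin> A)"
      by (rule cnt_cong) auto
    have s6: "cnt n (\<lambda>x y. (x\<in>D \<and> y<x) \<and> x \<in> A) = cnt n (\<lambda>x y. (x\<in>A \<and> y<x) \<and> x \<in> D)"
      by (rule cnt_cong) auto
    show ?thesis using s1 s2 s3 s4 s5 s6 by simp
  qed
  have F2': "card (A - D \<union> (D - A)) + 2 * card (A \<inter> D) = card A + card D"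
  proof -
    have "card (A - D \<union> (D - A)) = card (A - D) + card (D - A)"
      using fA by (intro card_Un_disjoint) auto
    moreover have "card A = card (A - D) + card (A \<inter> D)" using cAD[OF fA(1), of D] by simp
    moreover have "card D = card (D - A) + card (A \<inter> D)" using cAD[OF fA(2), of A] by (simp add: Int_commute)
    ultimately show ?thesis by simp
  qed
  have F3: "card D = card B" unfolding D_def
    using permutes_inj[OF w] by (simp add: card_image inj_on_def inj_def)
  have F4: "even (cnt n (\<lambda>x y. x<y \<and> w y < w x) + cnt n (\<lambda>x y. x\<in>B \<and> y\<in>B \<and> x<y \<and> w y < w x)
     + cnt n (\<lambda>x y. x\<notin>B \<and> y\<notin>B \<and> x<y \<and> w y < w x) + cnt n (\<lambda>x y. x\<in>B \<and> y<x)
     + cnt n (\<lambda>x y. x\<in>D \<and> y<x))" unfolding D_def by (rule F4[OF w B])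
  have i1: "(A - D \<union> (D - A)) \<inter> {..<n} = A - D \<union> (D - A)" "B \<inter> {..<n} = B" using AD B' by auto
  show ?thesis
    unfolding D_def[symmetric] sg_def clif_sign_def conj_sign_def power_add[symmetric]
    unfolding e1 e2 e3 e4 e5 e6 e7 i1
    by (rule m1_eq, rule par_arith[OF F1 F1' F2 F2' F3 F4])
qed

lemma S_sub: "se_basis n \<subseteq> Pow {..<n} \<times> {w. w permutes {..<n}}"
  unfolding se_basis_def by auto

lemma S_fin: "finite (se_basis n)"
  by (rule finite_subset[OF S_sub]) (simp add: finite_permutations)

lemma bmul_in: "p \<in> se_basis n \<Longrightarrow> q \<in> se_basis n \<Longrightarrow> snd (se_bmul p q :: 'k::field \<times> _) \<in> se_basis n"
  unfolding se_bmul_def se_basis_def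
  by (auto split: prod.splits simp: permutes_compose) (metis lessThan_iff permutes_in_image subsetD)+

definition fmap :: "nat \<Rightarrow> ('k::field_char_0) se \<Rightarrow> 'k se" where
  "fmap n m = (\<lambda>(C,u). if (C,u) \<in> se_basis n then sg n u * clif_sign ({..<n} - C) {..<n} * m ({..<n} - C, u) else 0)"

lemma tw:
  assumes p: "(A,w) \<in> se_basis n" and q: "(B,v) \<in> se_basis n" and c: "(C,u) \<in> se_basis n"
  shows "sg n u * clif_sign ({..<n} - C) {..<n} *
     (case se_bmul (A,w) (B,v) of (s,r) \<Rightarrow> if r = ({..<n} - C, u) then s * x (A,w) * m (B,v) else 0)
   = (case se_bmul (A,w) ({..<n} - B,v) of (s,r) \<Rightarrow> if r = (C,u) then s * (x (A,w) :: 'k::field_char_0) * fmap n m ({..<n} - B,v) else 0)"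
proof -
  have A: "A \<subseteq> {..<n}" and w: "w permutes {..<n}" and B: "B \<subseteq> {..<n}" and v: "v permutes {..<n}"
    and C: "C \<subseteq> {..<n}" and u: "u permutes {..<n}"
    using p q c unfolding se_basis_def by auto
  have WB: "w ` ({..<n} - B) = {..<n} - w ` B"
    using permutes_inj[OF w] permutes_image[OF w] by (simp add: image_set_diff)
  have D: "w ` B \<subseteq> {..<n}" using B permutes_in_image[OF w] by auto
  define X where "X = A - w ` B \<union> (w ` B - A)"
  have X: "X \<subseteq> {..<n}" using A D unfolding X_def by auto
  have X2: "A - ({..<n} - w ` B) \<union> (({..<n} - w ` B) - A) = {..<n} - X"
    using A D unfolding X_def by auto
  have cond: "(X = {..<n} - C) \<longleftrightarrow> ({..<n} - X = C)" using X C by auto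
  have fm: "fmap n m ({..<n} - B, v) = sg n v * clif_sign B {..<n} * m (B, v)"
  proof -
    have "({..<n} - B, v) \<in> se_basis n" using v unfolding se_basis_def by auto
    moreover have "{..<n} - ({..<n} - B) = B" using B by auto
    ultimately show ?thesis unfolding fmap_def by simp
  qed
  show ?thesis
  proof (cases "X = {..<n} - C \<and> w \<circ> v = u")
    case False
    have Xl: "\<And>y. y \<in> X \<Longrightarrow> y < n" using X by auto
    have l: "(X, w\<circ>v) \<noteq> ({..<n}-C, u)" using False by auto
    have r: "({..<n} - X, w\<circ>v) \<noteq> (C,u)" using False cond by auto
    have l': "(A - w ` B \<union> (w ` B - A), w\<circ>v) \<noteq> ({..<n}-C, u)" using l X_def by simp
    have r': "(A - ({..<n} - w ` B) \<union> (({..<n} - w ` B) - A), w\<circ>v) \<noteq> (C,u)" using r X2 by simp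
    show ?thesis unfolding se_bmul_def WB using l' r' by (simp add: WB) blast
  next
    case True
    then have u': "u = w \<circ> v" and CX: "{..<n} - C = X" by auto
    have CX2: "{..<n} - X = C" using CX cond by blast
    have k: "(sg n w :: 'k) * clif_sign X {..<n} * conj_sign w B * clif_sign A (w`B)
     = conj_sign w ({..<n} - B) * clif_sign A ({..<n} - w`B) * clif_sign B {..<n}"
      unfolding X_def by (rule key0[OF A B w])
    have "sg n u * clif_sign ({..<n} - C) {..<n} * (conj_sign w B * clif_sign A (w ` B) * x (A,w) * m (B,v))
       = sg n v * ((sg n w :: 'k) * clif_sign X {..<n} * conj_sign w B * clif_sign A (w`B)) * x (A,w) * m (B,v)"
      unfolding u' CX sg_mult[OF w v] by (simp add: mult_ac)
    also have "\<dots> = conj_sign w ({..<n} - B) * clif_sign A ({..<n} - w ` B) * x (A, w) * (sg n v * clif_sign B {..<n} * m (B, v))"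
      unfolding k by (simp add: mult_ac)
    finally show ?thesis unfolding se_bmul_def fm
      by (simp add: WB X2[unfolded CX2] X_def[symmetric] CX u')
  qed
qed

lemma fmap_mult: "fmap n (se_mult n x m) = se_mult n (x :: ('k::field_char_0) se) (fmap n m)"
proof
  fix c :: "nat set \<times> (nat \<Rightarrow> nat)"
  obtain C u where c: "c = (C,u)" by fastforce
  define S where "S = se_basis n"
  define \<psi> where "\<psi> = (\<lambda>(p::nat set \<times> (nat\<Rightarrow>nat), q::nat set \<times> (nat\<Rightarrow>nat)). (p, ({..<n} - fst q, snd q)))"
  have bij: "bij_betw \<psi> (S\<times>S) (S\<times>S)"
    by (rule bij_betw_byWitness[where f' = \<psi>]) (auto simp: \<psi>_def S_def se_basis_def)
  define g where "g = (\<lambda>(p,q). case se_bmul p q of (s,r) \<Rightarrow> if r = c then s * x p * fmap n m q else (0::'k))"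
  have R: "se_mult n x (fmap n m) c = (\<Sum>pq\<in>S\<times>S. g (\<psi> pq))"
    unfolding se_mult_def S_def[symmetric] g_def[symmetric] by (rule sum.reindex_bij_betw[OF bij, symmetric])
  show "fmap n (se_mult n x m) c = se_mult n x (fmap n m) c"
  proof (cases "c \<in> S")
    case False
    have "g (\<psi> pq) = 0" if "pq \<in> S\<times>S" for pq
    proof -
      have "\<psi> pq \<in> S\<times>S" using bij that unfolding bij_betw_def by blast
      then obtain p' q' where e: "\<psi> pq = (p',q')" "p' \<in> S" "q' \<in> S" by (cases "\<psi> pq") blast
      then have "snd (se_bmul p' q' :: 'k \<times> _) \<in> S" using bmul_in[of p' n q'] unfolding S_def by blast
      then have "snd (se_bmul p' q' :: 'k \<times> _) \<noteq> c" using False by blast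
      then show ?thesis unfolding e g_def by (cases "se_bmul p' q' :: 'k \<times> _") simp
    qed
    then have "se_mult n x (fmap n m) c = 0" unfolding R by (rule sum.neutral[OF ballI])
    moreover have "fmap n (se_mult n x m) c = 0" using False unfolding fmap_def c S_def by simp
    ultimately show ?thesis by simp
  next
    case True
    have "fmap n (se_mult n x m) c = sg n u * clif_sign ({..<n} - C) {..<n} * se_mult n x m ({..<n} - C, u)"
      using True unfolding fmap_def c S_def by simp
    also have "\<dots> = (\<Sum>pq\<in>S\<times>S. sg n u * clif_sign ({..<n} - C) {..<n} *
        (\<lambda>(p,q). case se_bmul p q of (s,r) \<Rightarrow> if r = ({..<n} - C, u) then s * x p * m q else (0::'k)) pq)"
      unfolding se_mult_def S_def[symmetric] by (rule sum_distrib_left)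
    also have "\<dots> = (\<Sum>pq\<in>S\<times>S. g (\<psi> pq))"
    proof (rule sum.cong[OF refl])
      fix pq assume "pq \<in> S\<times>S"
      then obtain A w B v where pq: "pq = ((A,w),(B,v))" "(A,w) \<in> S" "(B,v) \<in> S" by auto
      show "sg n u * clif_sign ({..<n} - C) {..<n} *
        (\<lambda>(p,q). case se_bmul p q of (s,r) \<Rightarrow> if r = ({..<n} - C, u) then s * x p * m q else (0::'k)) pq = g (\<psi> pq)"
      proof -
        have t: "sg n u * clif_sign ({..<n} - C) {..<n} *
           (case se_bmul (A,w) (B,v) of (s,r) \<Rightarrow> if r = ({..<n} - C, u) then s * x (A,w) * m (B,v) else 0)
         = (case se_bmul (A,w) ({..<n} - B,v) of (s,r) \<Rightarrow> if r = (C,u) then s * (x (A,w) :: 'k) * fmap n m ({..<n} - B,v) else 0)"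
          by (rule tw) (use pq True c S_def in auto)
        show ?thesis unfolding pq(1) g_def \<psi>_def c using t by simp
      qed
    qed
    finally show ?thesis using R by simp
  qed
qed

lemma S_eq: "se_basis n = Pow {..<n} \<times> {w. w permutes {..<n}}"
  unfolding se_basis_def by auto

lemma bmul_empty: "se_bmul (A,w) ({},v) = ((1::'k::field), (A, w \<circ> v))"
  unfolding se_bmul_def conj_sign_def clif_sign_def by simp

lemma mult_e:
  fixes x :: "('k::field_char_0) se" and h :: "(nat \<Rightarrow> nat) \<Rightarrow> 'k"
  assumes e: "e = (\<lambda>(A,w). if A = {} \<and> w permutes {..<n} then h w else 0)"
  shows "se_mult n x e (C,u) = (if (C,u) \<in> se_basis n then (\<Sum>w\<in>{w. w permutes {..<n}}. x (C,w) * h (inv w \<circ> u)) else 0)"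
proof -
  define S where "S = se_basis n"
  define P where "P = {w. w permutes {..<n}}"
  have fP: "finite P" unfolding P_def by (simp add: finite_permutations)
  have fS: "finite S" unfolding S_def by (rule S_fin)
  define F where "F = (\<lambda>p q. case se_bmul p q of (s,r) \<Rightarrow> if r = (C,u) then s * x p * e q else (0::'k))"
  have inner: "(\<Sum>q\<in>S. F (A,w) q) = (if A = C \<and> u \<in> P then x (A,w) * h (inv w \<circ> u) else 0)"
    if w: "w \<in> P" for A w
  proof -
    have wp: "w permutes {..<n}" using w P_def by simp
    have sub: "{{}} \<times> P \<subseteq> S" unfolding S_def S_eq P_def by auto
    have "(\<Sum>q\<in>S. F (A,w) q) = (\<Sum>q\<in>{{}} \<times> P. F (A,w) q)"
    proof (rule sum.mono_neutral_right[OF fS sub])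
      show "\<forall>i\<in>S - {{}} \<times> P. F (A, w) i = 0"
      proof
        fix i assume i: "i \<in> S - {{}} \<times> P"
        obtain B v where iv: "i = (B,v)" by fastforce
        have "e i = 0" using i iv unfolding e S_def S_eq P_def by auto
        then show "F (A, w) i = 0" unfolding F_def by (cases "se_bmul (A,w) i :: 'k \<times> _") simp
      qed
    qed
    also have "\<dots> = (\<Sum>v\<in>P. F (A,w) ({},v))"
    proof -
      have "{{}::nat set} \<times> P = (\<lambda>v. ({},v)) ` P" by auto
      then show ?thesis by (simp only:) (subst sum.reindex, auto simp: inj_on_def)
    qed
    also have "\<dots> = (\<Sum>v\<in>P. if v = inv w \<circ> u then (if A = C then x (A,w) * h v else 0) else 0)"
    proof (rule sum.cong[OF refl])
      fix v assume v: "v \<in> P"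
      have "(w \<circ> v = u) \<longleftrightarrow> (v = inv w \<circ> u)"
      proof
        assume "w \<circ> v = u" then show "v = inv w \<circ> u"
          using permutes_inv_o(2)[OF wp] by (metis comp_assoc comp_id id_comp)
      next
        assume "v = inv w \<circ> u" then show "w \<circ> v = u"
          using permutes_inv_o(1)[OF wp] by (metis comp_assoc id_comp)
      qed
      then show "F (A,w) ({},v) = (if v = inv w \<circ> u then (if A = C then x (A,w) * h v else 0) else 0)"
        using v unfolding F_def bmul_empty e P_def by auto
    qed
    also have "\<dots> = (if inv w \<circ> u \<in> P then (if A = C then x (A,w) * h (inv w \<circ> u) else 0) else 0)"
      by (rule sum.delta[OF fP])
    also have "\<dots> = (if A = C \<and> u \<in> P then x (A,w) * h (inv w \<circ> u) else 0)"
    proof -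
      have "inv w \<circ> u \<in> P \<longleftrightarrow> u \<in> P"
      proof
        assume "inv w \<circ> u \<in> P"
        then have "w \<circ> (inv w \<circ> u) permutes {..<n}" using wp P_def permutes_compose by blast
        then show "u \<in> P" using permutes_inv_o(1)[OF wp] P_def by (simp add: comp_assoc[symmetric])
      next
        assume "u \<in> P" then show "inv w \<circ> u \<in> P"
          using permutes_compose permutes_inv[OF wp] P_def by blast
      qed
      then show ?thesis by auto
    qed
    finally show ?thesis .
  qed
  have "se_mult n x e (C,u) = (\<Sum>p\<in>S. \<Sum>q\<in>S. F p q)"
    unfolding se_mult_def S_def[symmetric] F_def by (simp add: sum.cartesian_product)
  also have "\<dots> = (\<Sum>p\<in>Pow {..<n} \<times> P. \<Sum>q\<in>S. F p q)"
    by (subst (1) S_def, subst S_eq, unfold P_def) (rule refl)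
  also have "\<dots> = (\<Sum>A\<in>Pow {..<n}. \<Sum>w\<in>P. \<Sum>q\<in>S. F (A,w) q)"
    using sum.cartesian_product[of "\<lambda>A w. \<Sum>q\<in>S. F (A,w) q" P "Pow {..<n}"] by (simp add: split_def)
  also have "\<dots> = (\<Sum>A\<in>Pow {..<n}. if A = C then (\<Sum>w\<in>P. if u \<in> P then x (C,w) * h (inv w \<circ> u) else 0) else 0)"
    by (rule sum.cong[OF refl]) (auto simp: inner)
  also have "\<dots> = (if C \<in> Pow {..<n} then (\<Sum>w\<in>P. if u \<in> P then x (C,w) * h (inv w \<circ> u) else 0) else 0)"
    by (rule sum.delta) simp
  also have "\<dots> = (if (C,u) \<in> se_basis n then (\<Sum>w\<in>{w. w permutes {..<n}}. x (C,w) * h (inv w \<circ> u)) else 0)"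
    unfolding S_eq P_def by auto
  finally show ?thesis .
qed

definition Tset :: "nat \<Rightarrow> ('k::field_char_0) se set" where
  "Tset n = {y \<in> se_carrier n. \<forall>C u. u permutes {..<n} \<longrightarrow> y (C,u) = y (C,id)}"

definition Sset :: "nat \<Rightarrow> ('k::field_char_0) se set" where
  "Sset n = {y \<in> se_carrier n. \<forall>C u. u permutes {..<n} \<longrightarrow> y (C,u) = sg n u * y (C,id)}"

lemma e_triv_form: "(e_triv n :: ('k::field_char_0) se) = (\<lambda>(A,w). if A = {} \<and> w permutes {..<n} then (\<lambda>_. 1 / of_nat (fact n)) w else 0)"
  unfolding e_triv_def by simp

lemma e_sgn_form: "(e_sgn n :: ('k::field_char_0) se) = (\<lambda>(A,w). if A = {} \<and> w permutes {..<n} then (\<lambda>w. sg n w / of_nat (fact n)) w else 0)"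
  unfolding e_sgn_def sg_def by simp

lemma card_P: "card {w. w permutes {..<n}} = fact n"
  by (rule card_permutations) auto

lemma inS: "u permutes {..<n} \<Longrightarrow> (C,u) \<in> se_basis n \<longleftrightarrow> C \<subseteq> {..<n}"
  unfolding se_basis_def by auto

lemma ideal_triv: "se_left_ideal n (e_triv n :: ('k::field_char_0) se) = Tset n"
proof
  show "se_left_ideal n (e_triv n :: 'k se) \<subseteq> Tset n"
  proof
    fix y :: "'k se" assume "y \<in> se_left_ideal n (e_triv n)"
    then obtain x where y: "y = se_mult n x (e_triv n)" unfolding se_left_ideal_def by auto
    have f: "y (C,u) = (if (C,u) \<in> se_basis n then (\<Sum>w\<in>{w. w permutes {..<n}}. x (C,w) * (1 / of_nat (fact n))) else 0)" for C u
      unfolding y using mult_e[OF e_triv_form, of n x C u] by simp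
    have "y \<in> se_carrier n" unfolding se_carrier_def using f by auto
    moreover have "\<forall>C u. u permutes {..<n} \<longrightarrow> y (C,u) = y (C,id)" using f inS by auto
    ultimately show "y \<in> Tset n" unfolding Tset_def by blast
  qed
next
  show "Tset n \<subseteq> se_left_ideal n (e_triv n :: 'k se)"
  proof
    fix y :: "'k se" assume y: "y \<in> Tset n"
    have "se_mult n y (e_triv n) = y"
    proof
      fix c :: "nat set \<times> (nat \<Rightarrow> nat)"
      obtain C u where c: "c = (C,u)" by fastforce
      show "se_mult n y (e_triv n) c = y c"
      proof (cases "c \<in> se_basis n")
        case True
        then have u: "u permutes {..<n}" using c se_basis_def by auto
        have "se_mult n y (e_triv n) c = (\<Sum>w\<in>{w. w permutes {..<n}}. y (C,w) * (1 / of_nat (fact n)))"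
          unfolding c using mult_e[OF e_triv_form, of n y C u] True c by simp
        also have "\<dots> = (\<Sum>w\<in>{w. w permutes {..<n}}. y (C,id) * (1 / of_nat (fact n)))"
        proof (rule sum.cong[OF refl])
          fix w assume "w \<in> {w. w permutes {..<n}}"
          then have "y (C,w) = y (C,id)" using y unfolding Tset_def by blast
          then show "y (C,w) * (1 / of_nat (fact n)) = y (C,id) * (1 / of_nat (fact n))" by simp
        qed
        also have "\<dots> = y (C,id)" by (simp add: card_P)
        also have "\<dots> = y c"
        proof -
          have "y (C,u) = y (C,id)" using y u unfolding Tset_def by blast
          then show ?thesis by (simp add: c)
        qed
        finally show ?thesis .
      next
        case False
        have "y c = 0" using y False unfolding Tset_def se_carrier_def by blast
        moreover have "se_mult n y (e_triv n) c = 0" using mult_e[OF e_triv_form, of n y C u] False c by simp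
        ultimately show ?thesis by simp
      qed
    qed
    moreover have "y \<in> se_carrier n" using y unfolding Tset_def by blast
    ultimately show "y \<in> se_left_ideal n (e_triv n)" unfolding se_left_ideal_def by (intro CollectI exI[of _ y]) simp
  qed
qed

lemma ideal_sgn: "se_left_ideal n (e_sgn n :: ('k::field_char_0) se) = Sset n"
proof
  show "se_left_ideal n (e_sgn n :: 'k se) \<subseteq> Sset n"
  proof
    fix y :: "'k se" assume "y \<in> se_left_ideal n (e_sgn n)"
    then obtain x where y: "y = se_mult n x (e_sgn n)" unfolding se_left_ideal_def by auto
    have f: "y (C,u) = (if (C,u) \<in> se_basis n then (\<Sum>w\<in>{w. w permutes {..<n}}. x (C,w) * (sg n (inv w \<circ> u) / of_nat (fact n))) else 0)" for C u
      unfolding y using mult_e[OF e_sgn_form, of n x C u] by simp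
    have g: "y (C,u) = sg n u * (\<Sum>w\<in>{w. w permutes {..<n}}. x (C,w) * (sg n w / of_nat (fact n)))"
      if u: "u permutes {..<n}" and C: "C \<subseteq> {..<n}" for C u
    proof -
      have "y (C,u) = (\<Sum>w\<in>{w. w permutes {..<n}}. x (C,w) * (sg n (inv w \<circ> u) / of_nat (fact n)))"
        using f inS[OF u] C by simp
      also have "\<dots> = (\<Sum>w\<in>{w. w permutes {..<n}}. sg n u * (x (C,w) * (sg n w / of_nat (fact n))))"
        by (rule sum.cong[OF refl]) (simp add: sg_mult[OF permutes_inv u] sg_inv)
      finally show ?thesis by (simp add: sum_distrib_left)
    qed
    show "y \<in> Sset n" unfolding Sset_def se_carrier_def
    proof (intro CollectI conjI allI impI)
      fix b assume "b \<notin> se_basis n" then show "y b = 0" using f by (cases b) simp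
    next
      fix C u assume u: "u permutes {..<n}"
      show "y (C,u) = sg n u * y (C,id)"
      proof (cases "C \<subseteq> {..<n}")
        case True
        have "(sg n id :: 'k) = 1" by (rule sg_id)
        then show ?thesis using g[OF u True] g[OF permutes_id True] by simp
      next
        case False then show ?thesis using f inS u by simp
      qed
    qed
  qed
next
  show "Sset n \<subseteq> se_left_ideal n (e_sgn n :: 'k se)"
  proof
    fix y :: "'k se" assume y: "y \<in> Sset n"
    have "se_mult n y (e_sgn n) = y"
    proof
      fix c :: "nat set \<times> (nat \<Rightarrow> nat)"
      obtain C u where c: "c = (C,u)" by fastforce
      show "se_mult n y (e_sgn n) c = y c"
      proof (cases "c \<in> se_basis n")
        case True
        then have u: "u permutes {..<n}" using c se_basis_def by auto
        have "se_mult n y (e_sgn n) c = (\<Sum>w\<in>{w. w permutes {..<n}}. y (C,w) * (sg n (inv w \<circ> u) / of_nat (fact n)))"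
          unfolding c using mult_e[OF e_sgn_form, of n y C u] True c by simp
        also have "\<dots> = (\<Sum>w\<in>{w. w permutes {..<n}}. sg n u * y (C,id) * (1 / of_nat (fact n)))"
        proof (rule sum.cong[OF refl])
          fix w assume "w \<in> {w. w permutes {..<n}}"
          then have w: "w permutes {..<n}" by simp
          have "y (C,w) = sg n w * y (C,id)" using y w unfolding Sset_def by blast
          moreover have "(sg n (inv w \<circ> u) :: 'k) = sg n w * sg n u"
            by (simp add: sg_mult[OF permutes_inv[OF w] u] sg_inv[OF w])
          ultimately have "y (C,w) * (sg n (inv w \<circ> u) / of_nat (fact n)) = ((sg n w :: 'k) * sg n w) * (sg n u * y (C,id) * (1 / of_nat (fact n)))"
            by (simp only:) (simp add: divide_inverse mult_ac)
          also have "(sg n w :: 'k) * sg n w = 1" by (rule sg_sq)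
          finally show "y (C,w) * (sg n (inv w \<circ> u) / of_nat (fact n)) = sg n u * y (C,id) * (1 / of_nat (fact n))"
            by (simp only: mult_1_left)
        qed
        also have "\<dots> = sg n u * y (C,id)" by (simp add: card_P)
        also have "\<dots> = y c"
        proof -
          have "y (C,u) = sg n u * y (C,id)" using y u unfolding Sset_def by blast
          then show ?thesis by (simp add: c)
        qed
        finally show ?thesis .
      next
        case False
        have "y c = 0" using y False unfolding Sset_def se_carrier_def by blast
        moreover have "se_mult n y (e_sgn n) c = 0" using mult_e[OF e_sgn_form, of n y C u] False c by simp
        ultimately show ?thesis by simp
      qed
    qed
    moreover have "y \<in> se_carrier n" using y unfolding Sset_def by blast
    ultimately show "y \<in> se_left_ideal n (e_sgn n)" unfolding se_left_ideal_def by (intro CollectI exI[of _ y]) simp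
  qed
qed

lemma clif_sq: "(clif_sign X Y :: 'k::field) * clif_sign X Y = 1"
  unfolding clif_sign_def power_add[symmetric] by simp

lemma fmap_carrier: "fmap n y \<in> se_carrier n"
  unfolding se_carrier_def fmap_def by auto

definition gmap :: "nat \<Rightarrow> ('k::field_char_0) se \<Rightarrow> 'k se" where
  "gmap n m = (\<lambda>(C,u). if (C,u) \<in> se_basis n then sg n u * clif_sign C {..<n} * m ({..<n} - C, u) else 0)"

lemma gmap_carrier: "gmap n y \<in> se_carrier n"
  unfolding se_carrier_def gmap_def by auto

lemma fg_invol:
  assumes y: "y \<in> se_carrier n"
  shows "gmap n (fmap n (y :: ('k::field_char_0) se)) = y" "fmap n (gmap n y) = y"
proof -
  show "gmap n (fmap n y) = y"
  proof
    fix c :: "nat set \<times> (nat \<Rightarrow> nat)"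
    obtain C u where c: "c = (C,u)" by fastforce
    show "gmap n (fmap n y) c = y c"
    proof (cases "c \<in> se_basis n")
      case True
      then have C: "C \<subseteq> {..<n}" and u: "u permutes {..<n}" using c se_basis_def by auto
      have in2: "({..<n} - C, u) \<in> se_basis n" using u se_basis_def by auto
      have CC: "{..<n} - ({..<n} - C) = C" using C by auto
      have "gmap n (fmap n y) c = (sg n u * sg n u) * (clif_sign C {..<n} * clif_sign C {..<n}) * y (C,u)"
        using True in2 unfolding c fmap_def gmap_def by (simp add: CC mult_ac)
      also have "\<dots> = y c" by (simp add: sg_sq clif_sq c)
      finally show ?thesis .
    next
      case False
      then show ?thesis using y unfolding gmap_def se_carrier_def c by auto
    qed
  qed
  show "fmap n (gmap n y) = y"
  proof
    fix c :: "nat set \<times> (nat \<Rightarrow> nat)"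
    obtain C u where c: "c = (C,u)" by fastforce
    show "fmap n (gmap n y) c = y c"
    proof (cases "c \<in> se_basis n")
      case True
      then have C: "C \<subseteq> {..<n}" and u: "u permutes {..<n}" using c se_basis_def by auto
      have in2: "({..<n} - C, u) \<in> se_basis n" using u se_basis_def by auto
      have CC: "{..<n} - ({..<n} - C) = C" using C by auto
      have "fmap n (gmap n y) c = (sg n u * sg n u) * (clif_sign ({..<n} - C) {..<n} * clif_sign ({..<n} - C) {..<n}) * y (C,u)"
        using True in2 unfolding c fmap_def gmap_def by (simp add: CC mult_ac)
      also have "\<dots> = y c" by (simp add: sg_sq clif_sq c)
      finally show ?thesis .
    next
      case False
      then show ?thesis using y unfolding fmap_def se_carrier_def c by auto
    qed
  qed
qed

lemma fmap_T: "y \<in> Tset n \<Longrightarrow> fmap n y \<in> Sset n"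
proof -
  assume y: "y \<in> Tset n"
  have "fmap n y (C,u) = sg n u * fmap n y (C,id)" if u: "u permutes {..<n}" for C u
  proof (cases "C \<subseteq> {..<n}")
    case True
    have "y ({..<n} - C, u) = y ({..<n} - C, id)" using y u unfolding Tset_def by blast
    moreover have "(sg n id :: 'a) = 1" by (rule sg_id)
    ultimately show ?thesis using True u unfolding fmap_def se_basis_def by simp
  next
    case False then show ?thesis using u unfolding fmap_def se_basis_def by simp
  qed
  then show ?thesis unfolding Sset_def using fmap_carrier by blast
qed

lemma gmap_S: "y \<in> Sset n \<Longrightarrow> gmap n y \<in> Tset n"
proof -
  assume y: "y \<in> Sset n"
  have "gmap n y (C,u) = gmap n y (C,id)" if u: "u permutes {..<n}" for C u
  proof (cases "C \<subseteq> {..<n}")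
    case True
    have "y ({..<n} - C, u) = sg n u * y ({..<n} - C, id)" using y u unfolding Sset_def by blast
    moreover have "(sg n id :: 'a) = 1" by (rule sg_id)
    moreover have "(sg n u :: 'a) * sg n u = 1" by (rule sg_sq)
    ultimately show ?thesis using True u unfolding gmap_def se_basis_def
      by (simp add: mult.assoc[symmetric])
  next
    case False then show ?thesis using u unfolding gmap_def se_basis_def by simp
  qed
  then show ?thesis unfolding Tset_def using gmap_carrier by blast
qed

lemma fmap_add: "fmap n (se_add m1 m2) = se_add (fmap n m1) (fmap n m2)"
  unfolding fmap_def se_add_def by (auto simp: distrib_left)

lemma fmap_smult: "fmap n (se_smult a m) = se_smult a (fmap n m)"
  unfolding fmap_def se_smult_def by (auto simp: mult_ac)

lemma fmap_homog:
  assumes h: "se_homog n d m"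
  shows "se_homog n (d + n) (fmap n m)"
  unfolding se_homog_def
proof (intro conjI allI impI fmap_carrier)
  fix C u assume nz: "fmap n m (C,u) \<noteq> 0"
  then have inS: "(C,u) \<in> se_basis n" unfolding fmap_def by (auto split: if_splits)
  then have C: "C \<subseteq> {..<n}" unfolding se_basis_def by auto
  have "m ({..<n} - C, u) \<noteq> 0" using nz inS unfolding fmap_def by auto
  then have "even (card ({..<n} - C) + d)" using h unfolding se_homog_def by blast
  moreover have "card ({..<n} - C) = n - card C" using C by (simp add: card_Diff_subset finite_subset)
  moreover have "card C \<le> n" using C by (metis card_lessThan card_mono finite_lessThan)
  ultimately show "even (card C + (d + n))" by presburger
qed

theorem lemma2:
  fixes n :: nat
  assumes "n \<ge> 1"
  shows "\<exists>f :: ('k::field_char_0) se \<Rightarrow> 'k se.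
    bij_betw f (se_left_ideal n (e_triv n)) (se_left_ideal n (e_sgn n)) \<and>
    (\<forall>m1 \<in> se_left_ideal n (e_triv n). \<forall>m2 \<in> se_left_ideal n (e_triv n).
        f (se_add m1 m2) = se_add (f m1) (f m2)) \<and>
    (\<forall>a. \<forall>m \<in> se_left_ideal n (e_triv n). f (se_smult a m) = se_smult a (f m)) \<and>
    (\<forall>x \<in> se_carrier n. \<forall>m \<in> se_left_ideal n (e_triv n).
        f (se_mult n x m) = se_mult n x (f m)) \<and>
    (\<forall>d. \<forall>m \<in> se_left_ideal n (e_triv n). se_homog n d m \<longrightarrow> se_homog n (d + n) (f m))"
proof -
  have bij: "bij_betw (fmap n) (se_left_ideal n (e_triv n)) (se_left_ideal n (e_sgn n :: 'k se))"
    unfolding ideal_triv ideal_sgn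
  proof (rule bij_betw_byWitness[where f'="gmap n"])
    show "\<forall>a\<in>Tset n. gmap n (fmap n a) = (a :: 'k se)" using fg_invol(1) unfolding Tset_def by blast
    show "\<forall>a\<in>Sset n. fmap n (gmap n a) = (a :: 'k se)" using fg_invol(2) unfolding Sset_def by blast
    show "fmap n ` Tset n \<subseteq> (Sset n :: 'k se set)" using fmap_T by blast
    show "gmap n ` Sset n \<subseteq> (Tset n :: 'k se set)" using gmap_S by blast
  qed
  show ?thesis
    by (rule exI[of _ "fmap n"]) (simp add: bij fmap_add fmap_smult fmap_mult fmap_homog)
qed

end
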